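(* (i) $R_{\mathcal{S}^*_{Ne}}(\mathcal{S}^*_{RL})=\dfrac{56}{122-41\sqrt2}$. (ii) $R_{\mathcal{S}^*_{Ne}}(\mathcal{S}^*_{C})=\sqrt2-1$. (iii) $R_{\mathcal{S}^*_{Ne}}(\mathcal{S}^*_{R})=\dfrac{1}{3\sqrt2-3}$. Each radius is sharp, i.e. it is the exact value of the radius.
   Context: $\mathbb{D}=\{|z|<1\}$, $\mathbb{D}_r=\{|z|<r\}$. $\mathcal{A}$ is the class of analytic $f$ on $\mathbb{D}$ with $f(0)=0$, $f'(0)=1$; for $f\in\mathcal{A}$ let $\mathcal{Q}_f(z)=zf'(z)/f(z)$. For analytic $F,G$ on $\mathbb{D}$, $F\prec G$ means $F=G\circ w$ for some analytic $w:\mathbb{D}\to\mathbb{D}$ with $w(0)=0$. For analytic $\varphi$ on $\mathbb{D}$, $\mathcal{S}^*(\varphi)=\{f\in\mathcal{A}:\mathcal{Q}_f\prec\varphi\}$. Let $\varphi_{Ne}(z)=1+z-z^3/3$ (univalent on $\mathbb{D}$), $\Omega_{Ne}=\varphi_{Ne}(\mathbb{D})$, $\mathcal{S}^*_{Ne}=\mathcal{S}^*(\varphi_{Ne})$. For $\mathcal{G}\subset\mathcal{A}$, $R_{\mathcal{S}^*_{Ne}}(\mathcal{G})$ is the largest $\rho\in(0,1]$ such that $\mathcal{Q}_f(\mathbb{D}_\rho)\subseteq\Omega_{Ne}$ for all $f\in\mathcal{G}$ (equivalently $r^{-1}f(rz)\in\mathcal{S}^*_{Ne}$ for all $f\in\mathcal{G}$,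 $0<r\le\rho$). Classes: $\mathcal{S}^*_{RL}=\mathcal{S}^*(\varphi_{RL})$ with $\varphi_{RL}(z)=\sqrt2-(\sqrt2-1)\sqrt{\frac{1-z}{1+2(\sqrt2-1)z}}$ (principal branch); $\mathcal{S}^*_C=\mathcal{S}^*\big(1+\frac43 z+\frac23 z^2\big)$; $\mathcal{S}^*_R=\mathcal{S}^*(\varphi_0)$ with $\varphi_0(z)=1+\frac{z}{k}\cdot\frac{k+z}{k-z}$, $k=\sqrt2+1$. *)

theory Defs
  imports "HOL-Analysis.Analysis"
begin

definition classA :: "(complex \<Rightarrow> complex) set" where
  "classA = {f. f holomorphic_on ball 0 1 \<and> f 0 = 0 \<and> deriv f 0 = 1}"

text \<open>Q_f(z) = z f'(z)/f(z), with its removable value 1 at the origin.\<close>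
definition Qf :: "(complex \<Rightarrow> complex) \<Rightarrow> complex \<Rightarrow> complex" where
  "Qf f z = (if z = 0 then 1 else z * deriv f z / f z)"

definition subord :: "(complex \<Rightarrow> complex) \<Rightarrow> (complex \<Rightarrow> complex) \<Rightarrow> bool" where
  "subord F G \<longleftrightarrow> F holomorphic_on ball 0 1 \<and> G holomorphic_on ball 0 1 \<and>
     (\<exists>w. w holomorphic_on ball 0 1 \<and> w ` ball 0 1 \<subseteq> ball 0 1 \<and> w 0 = 0 \<and>
          (\<forall>z\<in>ball 0 1. F z = G (w z)))"

definition Sstar :: "(complex \<Rightarrow> complex) \<Rightarrow> (complex \<Rightarrow> complex) set" where
  "Sstar \<phi> = {f \<in> classA. subord (Qf f) \<phi>}"

definition phiNe :: "complex \<Rightarrow> complex" where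
  "phiNe z = 1 + z - z ^ 3 / 3"

definition OmegaNe :: "complex set" where
  "OmegaNe = phiNe ` ball 0 1"

definition radiusNe :: "(complex \<Rightarrow> complex) set \<Rightarrow> real" where
  "radiusNe G = (GREATEST \<rho>. \<rho> \<in> {0<..1} \<and> (\<forall>f\<in>G. Qf f ` ball 0 \<rho> \<subseteq> OmegaNe))"

definition phiRL :: "complex \<Rightarrow> complex" where
  "phiRL z = complex_of_real (sqrt 2) - complex_of_real (sqrt 2 - 1) *
     csqrt ((1 - z) / (1 + 2 * complex_of_real (sqrt 2 - 1) * z))"

definition phiC :: "complex \<Rightarrow> complex" where
  "phiC z = 1 + 4/3 * z + 2/3 * z ^ 2"

definition phi0 :: "complex \<Rightarrow> complex" where
  "phi0 z = (let k = complex_of_real (sqrt 2 + 1) in 1 + (z / k) * ((k + z) / (k - z)))"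

end

theory Submission
  imports Defs "HOL-Complex_Analysis.Complex_Analysis"
begin


lemma phiNe_holo: "phiNe holomorphic_on S"
  unfolding phiNe_def[abs_def] by (intro holomorphic_intros) auto

lemma phiNe_cont: "continuous_on S phiNe"
  using phiNe_holo holomorphic_on_imp_continuous_on by blast

lemma omega_open: "open OmegaNe"
proof -
  have "\<not> phiNe constant_on ball 0 1"
  proof
    assume "phiNe constant_on ball 0 1"
    then obtain c where c: "\<And>z. z \<in> ball 0 1 \<Longrightarrow> phiNe z = c" by (auto simp: constant_on_def)
    have "phiNe 0 = phiNe (1/2)" using c[of 0] c[of "1/2"] by simp
    then show False by (simp add: phiNe_def field_simps)
  qed
  then show ?thesis unfolding OmegaNe_def
    by (intro open_mapping_thm[OF phiNe_holo]) auto
qed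

lemma circle_far: "norm v = 1 \<Longrightarrow> norm (phiNe v - 1) \<ge> 2/3"
proof -
  assume v: "norm v = 1"
  have e: "phiNe v - 1 = v * (1 - v^2/3)" by (simp add: phiNe_def algebra_simps power3_eq_cube power2_eq_square)
  have "norm (1 - v^2/3) \<ge> norm (1::complex) - norm (v^2/3)" by (rule norm_triangle_ineq2)
  also have "norm (v^2/3) = 1/3" using v by (simp add: norm_power norm_divide)
  finally have "norm (1 - v^2/3) \<ge> 2/3" by simp
  then show ?thesis using v by (simp add: e norm_mult)
qed

lemma disk_sub: "ball 1 (2/3) \<subseteq> OmegaNe"
proof -
  define S where "S = ball (1::complex) (2/3)"
  define V where "V = - (phiNe ` cball 0 1)"
  have cV: "open V" unfolding V_def
    by (intro open_Compl compact_imp_closed compact_continuous_image phiNe_cont compact_cball)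
  have sub: "OmegaNe \<subseteq> phiNe ` cball 0 1" unfolding OmegaNe_def by auto
  have "S \<subseteq> OmegaNe \<union> V"
  proof
    fix w assume w: "w \<in> S"
    show "w \<in> OmegaNe \<union> V"
    proof (cases "w \<in> phiNe ` cball 0 1")
      case True
      then obtain v where v: "norm v \<le> 1" "w = phiNe v" by auto
      show ?thesis
      proof (cases "norm v = 1")
        case True
        then have "norm (w - 1) \<ge> 2/3" using circle_far v by simp
        with w show ?thesis by (simp add: S_def dist_norm norm_minus_commute)
      next
        case False
        then show ?thesis using v by (auto simp: OmegaNe_def)
      qed
    next
      case False then show ?thesis by (simp add: V_def)
    qed
  qed
  moreover have "OmegaNe \<inter> V \<inter> S = {}" using sub by (auto simp: V_def)
  moreover have "1 \<in> OmegaNe \<inter> S"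
  proof -
    have "phiNe 0 = 1" by (simp add: phiNe_def)
    then have "1 \<in> OmegaNe" unfolding OmegaNe_def by (metis centre_in_ball image_eqI zero_less_one)
    then show ?thesis by (simp add: S_def)
  qed
  ultimately have "V \<inter> S = {}"
    using connectedD[OF _ omega_open cV, of S] by (auto simp: S_def)
  with \<open>S \<subseteq> OmegaNe \<union> V\<close> show ?thesis unfolding S_def by blast
qed

lemma real_notin:
  fixes x :: real assumes "x \<ge> 5/3 \<or> x \<le> 1/3" shows "complex_of_real x \<notin> OmegaNe"
proof
  assume "complex_of_real x \<in> OmegaNe"
  then obtain v where v: "norm v < 1" "complex_of_real x = phiNe v" by (auto simp: OmegaNe_def)
  obtain a b where ab: "v = Complex a b" by (cases v)
  have Im: "Im (phiNe v) = b * (1 - a^2 + b^2/3)"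
    by (simp add: ab phiNe_def power3_eq_cube power2_eq_square algebra_simps) (simp add: field_simps)
  have Re: "Re (phiNe v) = 1 + a - (a^3 - 3*a*b^2)/3"
    by (simp add: ab phiNe_def power3_eq_cube power2_eq_square algebra_simps)
  have na: "a^2 + b^2 < 1" using v(1) by (simp add: ab cmod_def)
  then have a1: "a^2 < 1" by (smt (verit) zero_le_power2)
  have "1 - a^2 + b^2/3 > 0" using a1 zero_le_power2[of b] by linarith
  moreover have "b * (1 - a^2 + b^2/3) = 0" using Im v(2) by (metis Im_complex_of_real)
  ultimately have b0: "b = 0" by simp
  have xa: "x = 1 + a - a^3/3" using Re v(2) b0 by (metis Re_complex_of_real mult_zero_right power_zero_numeral diff_zero mult_zero_left)
  have "\<bar>a\<bar> < 1" using a1 by (simp add: abs_square_less_1)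
  then have am: "-1 < a" "a < 1" by auto
  have "5/3 - x = (a-1)^2*(a+2)/3" by (simp add: xa power2_eq_square power3_eq_cube algebra_simps)
  moreover have "x - 1/3 = (a+1)^2*(2-a)/3" by (simp add: xa power2_eq_square power3_eq_cube algebra_simps)
  moreover have "(a-1)^2*(a+2)/3 > 0" "(a+1)^2*(2-a)/3 > 0" using am by auto
  ultimately show False using assms by linarith
qed




lemma upper:
  assumes phi: "\<And>u. norm u < R \<Longrightarrow> \<phi> u \<in> OmegaNe" and f: "f \<in> Sstar \<phi>"
    and "\<rho> \<le> R" "R \<le> 1"
  shows "Qf f ` ball 0 \<rho> \<subseteq> OmegaNe"
proof
  fix y assume "y \<in> Qf f ` ball 0 \<rho>"
  then obtain z where z: "norm z < \<rho>" "y = Qf f z" by auto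
  from f obtain w where w: "w holomorphic_on ball 0 1" "w ` ball 0 1 \<subseteq> ball 0 1" "w 0 = 0"
     "\<forall>z\<in>ball 0 1. Qf f z = \<phi> (w z)"
    by (auto simp: Sstar_def subord_def)
  have z1: "norm z < 1" using z assms by linarith
  have "norm (w z) \<le> norm z"
    by (rule Schwarz_Lemma(1)[OF w(1) w(3)]) (use w(2) z1 in force)+
  then have "\<phi> (w z) \<in> OmegaNe" using phi z assms by simp
  then show "y \<in> OmegaNe" using w(4) z z1 by simp
qed

lemma extremal:
  assumes h: "h holomorphic_on ball 0 1" and eq: "\<And>u. u \<in> ball 0 1 \<Longrightarrow> \<phi> u = 1 + u * h u"
  shows "\<exists>f \<in> Sstar \<phi>. \<forall>z\<in>ball 0 1. Qf f z = \<phi> z"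
proof -
  obtain g where g: "\<And>x. x \<in> ball 0 1 \<Longrightarrow> (g has_field_derivative h x) (at x within ball 0 1)"
    using holomorphic_convex_primitive'[OF convex_ball open_ball h] by blast
  have g': "(g has_field_derivative h x) (at x)" if "x \<in> ball 0 1" for x
    using g[OF that] by (simp add: at_within_open[OF that open_ball])
  define f where "f z = z * exp (g z - g 0)" for z
  have fd: "(f has_field_derivative (exp (g z - g 0) + z * h z * exp (g z - g 0))) (at z)"
    if "z \<in> ball 0 1" for z
    unfolding f_def[abs_def]
    by (rule derivative_eq_intros refl g'[OF that] | simp)+
  have dfz: "deriv f z = exp (g z - g 0) + z * h z * exp (g z - g 0)" if "z \<in> ball 0 1" for z
    using DERIV_imp_deriv[OF fd[OF that]] .
  have fhol: "f holomorphic_on ball 0 1"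
    using fd by (auto simp: holomorphic_on_open field_differentiable_def) blast
  have fA: "f \<in> classA"
    unfolding classA_def using fhol dfz[of 0] by (simp add: f_def)
  have Q: "Qf f z = \<phi> z" if "z \<in> ball 0 1" for z
  proof (cases "z = 0")
    case True then show ?thesis using eq[OF that] by (simp add: Qf_def)
  next
    case False
    then show ?thesis using eq[OF that] dfz[OF that]
      by (simp add: Qf_def f_def field_simps)
  qed
  have phol: "\<phi> holomorphic_on ball 0 1"
    by (rule holomorphic_transform[of "\<lambda>u. 1 + u * h u"]) (use h eq in \<open>auto intro!: holomorphic_intros\<close>)
  have qhol: "Qf f holomorphic_on ball 0 1"
    by (rule holomorphic_transform[OF phol]) (use Q in auto)
  have "subord (Qf f) \<phi>"
    unfolding subord_def using qhol phol Q
    by (intro conjI exI[of _ "\<lambda>z. z"]) (auto intro: holomorphic_intros)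
  then show ?thesis using fA Q by (auto simp: Sstar_def)
qed

lemma radius_eq:
  assumes R: "0 < R" "R \<le> 1" and phi: "\<And>u. norm u < R \<Longrightarrow> \<phi> u \<in> OmegaNe"
    and sharp: "\<And>\<rho>. R < \<rho> \<Longrightarrow> \<rho> \<le> 1 \<Longrightarrow> \<exists>f\<in>Sstar \<phi>. \<exists>z\<in>ball 0 \<rho>. Qf f z \<notin> OmegaNe"
  shows "radiusNe (Sstar \<phi>) = R"
  unfolding radiusNe_def
proof (rule Greatest_equality)
  show "R \<in> {0<..1} \<and> (\<forall>f\<in>Sstar \<phi>. Qf f ` ball 0 R \<subseteq> OmegaNe)"
    using R upper[OF phi] by auto
next
  fix y assume y: "y \<in> {0<..1} \<and> (\<forall>f\<in>Sstar \<phi>. Qf f ` ball 0 y \<subseteq> OmegaNe)"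
  show "y \<le> R"
  proof (rule ccontr)
    assume "\<not> y \<le> R"
    then obtain f z where "f \<in> Sstar \<phi>" "z \<in> ball 0 y" "Qf f z \<notin> OmegaNe" using sharp y by force
    then show False using y by blast
  qed
qed




lemma ball_Omega: "norm (w - 1) < 2/3 \<Longrightarrow> w \<in> OmegaNe"
  using disk_sub by (auto simp: dist_norm norm_minus_commute)

lemma sqrt2_bounds: "1.4142 < sqrt 2" "sqrt 2 < 1.4143"
proof -
  show "1.4142 < sqrt 2" by (rule real_less_rsqrt) (simp add: power2_eq_square)
  have "sqrt 2 < sqrt (1.4143^2)" by (simp only: real_sqrt_less_iff) (simp add: power2_eq_square)
  then show "sqrt 2 < 1.4143" by simp
qed

lemma sharp_generic:
  assumes h: "h holomorphic_on ball 0 1" and eq: "\<And>u. u \<in> ball 0 1 \<Longrightarrow> \<phi> u = 1 + u * h u"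
    and pt: "\<And>\<rho>. R < \<rho> \<Longrightarrow> \<rho> \<le> 1 \<Longrightarrow> \<exists>z\<in>ball 0 \<rho>. \<phi> z \<notin> OmegaNe"
    and "R < \<rho>" "\<rho> \<le> 1"
  shows "\<exists>f\<in>Sstar \<phi>. \<exists>z\<in>ball 0 \<rho>. Qf f z \<notin> OmegaNe"
proof -
  obtain f where f: "f \<in> Sstar \<phi>" "\<forall>z\<in>ball 0 1. Qf f z = \<phi> z" using extremal[OF h eq] by blast
  obtain z where z: "z \<in> ball 0 \<rho>" "\<phi> z \<notin> OmegaNe" using pt assms by blast
  have "z \<in> ball 0 1" using z assms by auto
  then have "Qf f z \<notin> OmegaNe" using f z by auto
  then show ?thesis using f(1) z(1) by blast
qed

lemma radius_C: "radiusNe (Sstar phiC) = sqrt 2 - 1"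
proof -
  define R where "R = sqrt 2 - 1"
  have R0: "0 < R" "R \<le> 1" using sqrt2_bounds by (auto simp: R_def)
  have R2: "R*(4+2*R) = 2" unfolding R_def by (simp add: algebra_simps power2_eq_square)
  have e: "phiC u = 1 + u * (4/3 + 2/3*u)" for u by (simp add: phiC_def algebra_simps power2_eq_square)
  have bnd: "phiC u \<in> OmegaNe" if u: "norm u < R" for u
  proof (rule ball_Omega)
    have "norm (phiC u - 1) = norm u * norm (4/3 + 2/3*u)" by (simp add: e norm_mult)
    also have "\<dots> \<le> norm u * (4/3 + 2/3*norm u)"
    proof (rule mult_left_mono)
      have "norm (4/3 + 2/3*u) \<le> norm (4/3::complex) + norm (2/3*u)" by (rule norm_triangle_ineq)
      then show "norm (4/3 + 2/3*u) \<le> 4/3 + 2/3*norm u" by (simp add: norm_mult)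
    qed simp
    also have "\<dots> = norm u * (4 + 2*norm u) / 3" by (simp add: field_simps)
    also have "norm u * (4 + 2*norm u) < R * (4 + 2*R)"
      using u R0 by (intro mult_strict_mono) auto
    then have "norm u * (4 + 2*norm u) / 3 < 2/3" using R2 by simp
    finally show "norm (phiC u - 1) < 2/3" .
  qed
  have pt: "\<exists>z\<in>ball 0 \<rho>. phiC z \<notin> OmegaNe" if "R < \<rho>" "\<rho> \<le> 1" for \<rho>
  proof -
    define x where "x = (R + \<rho>)/2"
    have x: "R < x" "x < \<rho>" using that by (auto simp: x_def)
    have "R * (4 + 2*R) < x * (4 + 2*x)" using x R0 by (intro mult_strict_mono) auto
    then have v: "1 + 4/3*x + 2/3*x^2 \<ge> 5/3" using R2 by (simp add: algebra_simps power2_eq_square)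
    have eq: "phiC (of_real x) = of_real (1 + 4/3*x + 2/3*x^2)" by (simp add: phiC_def)
    have nin: "complex_of_real (1 + 4/3*x + 2/3*x^2) \<notin> OmegaNe" by (rule real_notin) (use v in simp)
    have "phiC (of_real x) \<notin> OmegaNe" using nin unfolding eq .
    moreover have "complex_of_real x \<in> ball 0 \<rho>" using x R0 by simp
    ultimately show ?thesis by blast
  qed
  have "radiusNe (Sstar phiC) = R"
  proof (rule radius_eq[OF R0])
    show "\<And>u. norm u < R \<Longrightarrow> phiC u \<in> OmegaNe" by (rule bnd)
    fix \<rho> assume r: "R < \<rho>" "\<rho> \<le> 1"
    show "\<exists>f\<in>Sstar phiC. \<exists>z\<in>ball 0 \<rho>. Qf f z \<notin> OmegaNe"
    proof (rule sharp_generic)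
      show "(\<lambda>u. 4/3 + 2/3*u) holomorphic_on ball 0 1" by (intro holomorphic_intros)
      show "\<And>u. u \<in> ball 0 1 \<Longrightarrow> phiC u = 1 + u*(4/3+2/3*u)" by (rule e)
    qed (use pt r in auto)
  qed
  then show ?thesis by (simp add: R_def)
qed

lemma radius_0: "radiusNe (Sstar phi0) = 1 / (3 * sqrt 2 - 3)"
proof -
  define kk where "kk = sqrt 2 + 1"
  define R where "R = kk / 3"
  have kk1: "kk > 1" "kk < 3" using sqrt2_bounds by (auto simp: kk_def)
  have R0: "0 < R" "R \<le> 1" "R < kk" using kk1 by (auto simp: R_def)
  have Rv: "R * (kk + R) / (kk - R) = 2*kk/3" using kk1 by (simp add: R_def field_simps)
  have Req: "1 / (3 * sqrt 2 - 3) = R"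
  proof -
    have "(3 * sqrt 2 - 3) * (sqrt 2 + 1) = 3" by (simp add: algebra_simps)
    moreover have "3 * sqrt 2 - 3 \<noteq> 0" using sqrt2_bounds by auto
    ultimately show ?thesis unfolding R_def kk_def by (simp add: field_simps)
  qed
  let ?k = "complex_of_real kk"
  have e: "phi0 u = 1 + u * ((1/?k) * ((?k + u) / (?k - u)))" for u
    by (simp add: phi0_def kk_def Let_def)
  have mono: "t * (kk + t) / (kk - t) < s * (kk + s) / (kk - s)" if "0 \<le> t" "t < s" "s < kk" for t s
  proof -
    have "t * (kk + t) / (kk - t) \<le> t * (kk + t) / (kk - s)"
      using that kk1 by (intro divide_left_mono) (auto intro!: mult_pos_pos)
    also have "\<dots> < s * (kk + s) / (kk - s)"
      using that kk1 by (intro divide_strict_right_mono mult_strict_mono) auto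
    finally show ?thesis .
  qed
  have bnd: "phi0 u \<in> OmegaNe" if u: "norm u < R" for u
  proof (rule ball_Omega)
    have n1: "norm (?k + u) \<le> kk + norm u"
      using norm_triangle_ineq[of ?k u] kk1 by simp
    have n2: "norm (?k - u) \<ge> kk - norm u"
      using norm_triangle_ineq2[of ?k u] kk1 by simp
    have pos: "kk - norm u > 0" using u R0 by simp
    have "norm (phi0 u - 1) = norm u / kk * (norm (?k + u) / norm (?k - u))"
      using kk1 by (simp add: e norm_mult norm_divide)
    also have "\<dots> \<le> norm u / kk * ((kk + norm u) / (kk - norm u))"
      using n1 n2 pos kk1 by (intro mult_left_mono frac_le) auto
    also have "\<dots> = (norm u * (kk + norm u) / (kk - norm u)) / kk" by simp
    also have "\<dots> < (R * (kk + R) / (kk - R)) / kk"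
      using mono[of "norm u" R] u R0 kk1 by (intro divide_strict_right_mono) auto
    also have "\<dots> = 2/3" unfolding Rv using kk1 by simp
    finally show "norm (phi0 u - 1) < 2/3" .
  qed
  have pt: "\<exists>z\<in>ball 0 \<rho>. phi0 z \<notin> OmegaNe" if "R < \<rho>" "\<rho> \<le> 1" for \<rho>
  proof -
    define x where "x = (R + \<rho>)/2"
    have x: "R < x" "x < \<rho>" "x < kk" using that kk1 by (auto simp: x_def)
    have "R * (kk + R) / (kk - R) < x * (kk + x) / (kk - x)" using mono[of R x] x R0 by simp
    then have "2*kk/3 < x * (kk + x) / (kk - x)" unfolding Rv .
    moreover obtain X where X: "X = x * (kk + x) / (kk - x)" by blast
    ultimately have "2*kk/3 < X" by simp
    then have "2/3 < X / kk" using kk1 by (simp add: pos_less_divide_eq)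
    then have "2/3 < (x * (kk + x) / (kk - x)) / kk" using X by simp
    moreover have "x / kk * ((kk + x) / (kk - x)) = (x * (kk + x) / (kk - x)) / kk" by simp
    ultimately have v: "1 + x / kk * ((kk + x) / (kk - x)) \<ge> 5/3" by linarith
    have eq: "phi0 (of_real x) = of_real (1 + x / kk * ((kk + x) / (kk - x)))"
      by (simp add: phi0_def kk_def Let_def)
    have nin: "complex_of_real (1 + x / kk * ((kk + x) / (kk - x))) \<notin> OmegaNe" by (rule real_notin) (use v in simp)
    have "phi0 (of_real x) \<notin> OmegaNe" using nin unfolding eq .
    moreover have "complex_of_real x \<in> ball 0 \<rho>" using x R0 by simp
    ultimately show ?thesis by blast
  qed
  have hol: "(\<lambda>u. (1/?k) * ((?k + u) / (?k - u))) holomorphic_on ball 0 1"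
  proof (intro holomorphic_intros)
    fix u :: complex assume "u \<in> ball 0 1"
    then have "norm u < norm ?k" using kk1 by simp
    then show "?k - u \<noteq> 0" by auto
  qed
  have "radiusNe (Sstar phi0) = R"
  proof (rule radius_eq[OF R0(1,2)])
    show "\<And>u. norm u < R \<Longrightarrow> phi0 u \<in> OmegaNe" by (rule bnd)
    fix \<rho> assume r: "R < \<rho>" "\<rho> \<le> 1"
    show "\<exists>f\<in>Sstar phi0. \<exists>z\<in>ball 0 \<rho>. Qf f z \<notin> OmegaNe"
    proof (rule sharp_generic[OF hol])
      show "\<And>u. u \<in> ball 0 1 \<Longrightarrow> phi0 u = 1 + u * ((1/?k) * ((?k + u) / (?k - u)))" by (rule e)
    qed (use pt r in auto)
  qed
  then show ?thesis by (simp add: Req)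
qed



lemma RL_real:
  fixes x y \<rho> q :: real
  assumes q: "q = sqrt 2" and rho: "\<rho> = sqrt (x^2+y^2)"
    and H: "677329*((1-x)^2+y^2) < (291936+160064*q)*((1+(2*q-2)*x)^2 + (2*q-2)^2*y^2)"
  shows "1 + \<rho> - 2* sqrt((\<rho>+x)/2) < 4/3 + 8*q/9"
proof -
  have q2: "q*q = 2" using q by simp
  have q3: "q*(q*z) = 2*z" for z using q2 by (metis mult.assoc)
  have qb1: "1.4142 < q" unfolding q by (rule real_less_rsqrt) (simp add: power2_eq_square)
  have "sqrt 2 < sqrt (1.4143^2)" by (simp only: real_sqrt_less_iff) (simp add: power2_eq_square)
  then have qb2: "q < 1.4143" unfolding q by simp
  note qb = qb1 qb2
  have r2: "\<rho>^2 = x^2 + y^2" using rho by simp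
  have r0: "\<rho> \<ge> 0" using rho by simp
  have xr: "x \<le> \<rho>" using rho real_sqrt_sum_squares_ge1 by blast
  have y2: "y^2 = \<rho>^2 - x^2" using r2 by simp
  define al where "al = -264879 + 414720*q"
  define be where "be = 733713 + 263744*q"
  define ga where "ga = 385393 - 160064*q"
  have al0: "al > 0" "be > 0" "ga > 0" using qb by (auto simp: al_def be_def ga_def)
  have eqH: "(291936+160064*q)*((1+(2*q-2)*x)^2 + (2*q-2)^2*y^2) - 677329*((1-x)^2+y^2)
     = - (al*\<rho>^2 - 2*be*x + ga)"
    unfolding y2 al_def be_def ga_def by (simp add: algebra_simps power2_eq_square q2 q3)
  have Hc: "al*\<rho>^2 - 2*be*x + ga < 0" using H eqH by linarith
  define a where "a = -463/713 + 364/713*q"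
  define b where "b = 11/3 + 20/9*q"
  have ab: "al*(\<rho>-a)*(\<rho>-b) = al*\<rho>^2 - 2*be*\<rho> + ga"
    unfolding al_def be_def ga_def a_def b_def by (simp add: algebra_simps power2_eq_square q2 q3)
  have "al*\<rho>^2 - 2*be*\<rho> + ga \<le> al*\<rho>^2 - 2*be*x + ga" using xr al0 by simp
  then have "al*((\<rho>-a)*(\<rho>-b)) < 0" using Hc ab by (simp add: mult.assoc)
  then have pab: "(\<rho>-a)*(\<rho>-b) < 0" using al0 by (simp add: mult_less_0_iff)
  have "a < b" using qb by (simp add: a_def b_def)
  have rb: "\<rho> < b"
  proof (rule ccontr)
    assume "\<not> \<rho> < b"
    then have "(\<rho>-a)*(\<rho>-b) \<ge> 0" using \<open>a < b\<close> by simp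
    with pab show False by simp
  qed
  have "2*be*x > al*\<rho>^2 + ga" using Hc by simp
  moreover have "al*\<rho>^2 \<ge> 0" using al0 by simp
  ultimately have "2*be*x > 0" using al0 by linarith
  then have x0: "x > 0" using al0 by (simp add: zero_less_mult_iff)
  have sp: "sqrt((\<rho>+x)/2) > 0" using x0 r0 by simp
  show ?thesis
  proof (cases "\<rho> \<le> 1/3 + 8*q/9")
    case True then show ?thesis using sp by linarith
  next
    case False
    define t where "t = 1 + \<rho> - (4/3 + 8*q/9)"
    have t0: "t > 0" using False by (simp add: t_def)
    define e where "e = 3/392 + 1213/3528*q"
    define A where "A = 998592 - 150976*q"
    have A0: "A > 0" "e < 1/3 + 8*q/9" using qb by (auto simp: A_def e_def)
    have G: "be*t^2 - 2*be*\<rho> - al*\<rho>^2 - ga = A*(\<rho>-b)*(\<rho>-e)"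
      unfolding t_def al_def be_def ga_def A_def b_def e_def
      by (simp add: algebra_simps power2_eq_square q2 q3)
    have "A*((\<rho>-b)*(\<rho>-e)) < 0" 
    proof -
      have "\<rho> - b < 0" "\<rho> - e > 0" using A0 rb False by auto
      then have "(\<rho>-b)*(\<rho>-e) < 0" by (rule mult_neg_pos)
      then show ?thesis using A0(1) by (simp add: mult_pos_neg)
    qed
    then have "be*t^2 < 2*be*\<rho> + al*\<rho>^2 + ga" using G by (simp add: mult.assoc)
    also have "\<dots> < 2*be*\<rho> + 2*be*x" using Hc by simp
    finally have "be*t^2 < be*(2*(\<rho>+x))" by (simp add: algebra_simps)
    then have "t^2 < 2*(\<rho>+x)" using al0 by simp
    then have "t < sqrt (2*(\<rho>+x))" by (rule real_less_rsqrt)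
    also have "sqrt (2*(\<rho>+x)) = 2* sqrt((\<rho>+x)/2)"
    proof -
      have "sqrt (2*(\<rho>+x)) = sqrt (2^2 * ((\<rho>+x)/2))" by simp
      also have "\<dots> = 2 * sqrt((\<rho>+x)/2)" by (simp only: real_sqrt_mult) simp
      finally show ?thesis .
    qed
    finally show ?thesis by (simp add: t_def)
  qed
qed

lemma radius_RL: "radiusNe (Sstar phiRL) = 56 / (122 - 41 * sqrt 2)"
proof -
  define q where "q = sqrt 2"
  have q2: "q*q = 2" by (simp add: q_def)
  have q3: "q*(q*z) = 2*z" for z using q2 by (metis mult.assoc)
  have qb: "1.4142 < q" "q < 1.4143" using sqrt2_bounds by (auto simp: q_def)
  define c where "c = 2*(q-1)"
  have c01: "0 < c" "c < 1" using qb by (auto simp: c_def)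
  define R where "R = (488 + 164*q)/823"
  have R0: "0 < R" "R \<le> 1" using qb by (auto simp: R_def)
  have Req: "56 / (122 - 41 * sqrt 2) = R"
  proof -
    have "(122 - 41*q) * (488 + 164*q) = 56 * 823" by (simp add: algebra_simps q2 q3)
    moreover have "122 - 41*q \<noteq> 0" using qb by auto
    ultimately show ?thesis unfolding R_def q_def[symmetric] by (simp add: field_simps)
  qed
  let ?c = "complex_of_real c"
  define m where "m u = (1 - u) / (1 + 2 * complex_of_real (sqrt 2 - 1) * u)" for u
  have m': "m u = (1 - u) / (1 + ?c * u)" for u by (simp add: m_def c_def q_def)
  have phiRL': "phiRL u = of_real q - of_real (q - 1) * csqrt (m u)" for u
    by (simp add: phiRL_def m_def q_def)
  have dnz: "1 + ?c * u \<noteq> 0" if "norm u < 1" for u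
  proof
    assume "1 + ?c * u = 0"
    then have "?c * u = -1" by (simp add: eq_neg_iff_add_eq_0 add.commute)
    then have "norm (?c * u) = 1" by simp
    moreover have "norm (?c * u) = c * norm u" using c01 by (simp add: norm_mult)
    moreover have "c * norm u < c * 1" using that c01 by (intro mult_strict_left_mono) auto
    ultimately show False using c01 by simp
  qed
  have Rem: "Re (m u) > 0" if u: "norm u < 1" for u
  proof -
    obtain s t where st: "u = Complex s t" by (cases u)
    have n: "s^2 + t^2 < 1" using u by (simp add: st cmod_def)
    have "s^2 < 1" using n zero_le_power2[of t] by linarith
    then have "\<bar>s\<bar> < 1" by (simp add: abs_square_less_1)
    have den: "(Re (1 + ?c * u))^2 + (Im (1 + ?c * u))^2 > 0"
      using dnz[OF u] by (simp add: complex_eq_iff sum_power2_gt_zero_iff)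
    have num: "Re (1 - u) * Re (1 + ?c * u) + Im (1 - u) * Im (1 + ?c * u) = 1 + c* s - s - c*(s^2+t^2)"
      by (simp add: st algebra_simps power2_eq_square)
    have "(1 - c)* s < 1 - c" using \<open>\<bar>s\<bar> < 1\<close> c01 by simp
    moreover have "c*(s^2+t^2) < c" using n c01 by simp
    ultimately have "1 + c* s - s - c*(s^2+t^2) > 0" by (simp add: algebra_simps)
    moreover have "Re (m u) = (1 + c * s - s - c*(s^2+t^2)) / ((Re (1 + ?c * u))^2 + (Im (1 + ?c * u))^2)"
      unfolding m' Re_divide num ..
    ultimately show ?thesis using den by (simp only:) (rule divide_pos_pos)
  qed
  have mnp: "m u \<notin> \<real>\<^sub>\<le>\<^sub>0" if "norm u < 1" for u
    using Rem[OF that] by (auto simp: complex_nonpos_Reals_iff)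
  have spos: "1 + csqrt z \<noteq> 0" for z
  proof
    assume "1 + csqrt z = 0"
    then have "Re (1 + csqrt z) = 0" by (simp only: zero_complex.sel)
    then have "1 + Re (csqrt z) = 0" by (simp only: plus_complex.sel one_complex.sel)
    then show False using Re_csqrt[of z] by linarith
  qed
  define h where "h u = of_real (q - 1) * (1 + ?c) / ((1 + ?c * u) * (1 + csqrt (m u)))" for u
  have hm: "(\<lambda>u. (1 - u) / (1 + ?c * u)) holomorphic_on ball 0 1"
    by (intro holomorphic_intros) (use dnz in auto)
  have hs: "(\<lambda>u. csqrt (m u)) holomorphic_on ball 0 1"
    unfolding m' by (rule holomorphic_on_csqrt'[OF hm]) (use mnp in \<open>auto simp: m'\<close>)
  have hd1: "(\<lambda>u. 1 + ?c * u) holomorphic_on ball 0 1" by (intro holomorphic_intros)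
  have hd2: "(\<lambda>u. 1 + csqrt (m u)) holomorphic_on ball 0 1"
    by (rule holomorphic_on_add[OF holomorphic_on_const hs])
  have hd: "(\<lambda>u. (1 + ?c * u) * (1 + csqrt (m u))) holomorphic_on ball 0 1"
    by (rule holomorphic_on_mult[OF hd1 hd2])
  have hol: "h holomorphic_on ball 0 1"
    unfolding h_def[abs_def]
    by (rule holomorphic_on_divide[OF holomorphic_on_const hd]) (use dnz spos in auto)
  have eq: "phiRL u = 1 + u * h u" if "u \<in> ball 0 1" for u
  proof -
    define s where "s = csqrt (m u)"
    define d where "d = 1 + ?c * u"
    have d0: "d \<noteq> 0" using dnz that by (simp add: d_def)
    have s1: "1 + s \<noteq> 0" using spos by (simp add: s_def)
    have ss: "s^2 * d = 1 - u" using d0 by (simp add: s_def m' d_def)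
    have key: "(1 - s) * (d * (1 + s)) = (1 + ?c) * u"
    proof -
      have "(1 - s) * (d * (1 + s)) = d - s^2 * d" by (simp add: algebra_simps power2_eq_square)
      also have "\<dots> = (1 + ?c) * u" using ss by (simp add: d_def algebra_simps)
      finally show ?thesis .
    qed
    have "1 - s = (1 + ?c) * u / (d * (1 + s))" by (rule eq_divide_imp[OF _ key]) (simp add: d0 s1)
    have p1: "phiRL u - 1 = of_real (q-1) * (1 - s)"
      by (simp add: phiRL' s_def algebra_simps)
    have hu: "u * h u = of_real (q-1) * ((1 + ?c) * u / (d * (1 + s)))"
      unfolding h_def d_def[symmetric] s_def[symmetric] using d0 s1 by (simp add: field_simps)
    have "phiRL u - 1 = u * h u" using p1 hu \<open>1 - s = _\<close> by simp
    then show ?thesis by (metis add.commute diff_eq_eq)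
  qed
  have bnd: "phiRL u \<in> OmegaNe" if u: "norm u < R" for u
  proof (rule ball_Omega)
    have u1: "norm u < 1" using u R0 by simp
    define \<zeta> where "\<zeta> = m u"
    define s where "s = csqrt \<zeta>"
    define x where "x = Re \<zeta>"
    define y where "y = Im \<zeta>"
    define \<rho> where "\<rho> = sqrt (x^2 + y^2)"
    have rho_n: "\<rho> = norm \<zeta>" by (simp add: \<rho>_def x_def y_def cmod_def)
    have "\<zeta> * (1 + ?c * u) = 1 - u" using dnz[OF u1] by (simp add: \<zeta>_def m')
    then have ue: "u * (1 + ?c * \<zeta>) = 1 - \<zeta>" by (simp add: algebra_simps)
    have nz: "1 + ?c * \<zeta> \<noteq> 0"
    proof
      assume "1 + ?c * \<zeta> = 0"
      then have "\<zeta> = 1" using ue by simp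
      then have "complex_of_real (1 + c) = 0" using \<open>1 + ?c * \<zeta> = 0\<close> by simp
      then have "1 + c = 0" by (simp only: of_real_eq_0_iff)
      then show False using c01 by simp
    qed
    have "norm (1 - \<zeta>) = norm u * norm (1 + ?c * \<zeta>)" unfolding ue[symmetric] by (rule norm_mult)
    also have "\<dots> < R * norm (1 + ?c * \<zeta>)" using u nz by simp
    finally have lt: "norm (1 - \<zeta>) < R * norm (1 + ?c * \<zeta>)" .
    then have "(norm (1 - \<zeta>))^2 < (R * norm (1 + ?c * \<zeta>))^2"
      by (intro power_strict_mono) auto
    also have "\<dots> = R^2 * (norm (1 + ?c * \<zeta>))^2" by (simp add: power_mult_distrib)
    finally have lt2: "(norm (1 - \<zeta>))^2 < R^2 * (norm (1 + ?c * \<zeta>))^2" .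
    have n1: "(norm (1 - \<zeta>))^2 = (1-x)^2 + y^2"
      by (simp add: x_def y_def cmod_def)
    have n2: "(norm (1 + ?c * \<zeta>))^2 = (1+c*x)^2 + c^2*y^2"
      by (simp add: x_def y_def cmod_def power_mult_distrib)
    have r2: "677329 * R^2 = 291936 + 160064*q"
      by (simp add: R_def power2_eq_square algebra_simps q2 q3)
    have c': "c = 2*q-2" by (simp add: c_def)
    have "(1-x)^2 + y^2 < R^2 * ((1+c*x)^2 + c^2*y^2)" using lt2 unfolding n1 n2 .
    then have "677329*((1-x)^2 + y^2) < (677329 * R^2) * ((1+c*x)^2 + c^2*y^2)" by simp
    then have H: "677329*((1-x)^2+y^2) < (291936+160064*q)*((1+(2*q-2)*x)^2 + (2*q-2)^2*y^2)"
      unfolding r2 c' .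
    have main: "1 + \<rho> - 2 * sqrt((\<rho>+x)/2) < 4/3 + 8*q/9"
      by (rule RL_real[OF q_def \<rho>_def H])
    have ns1: "(norm (1 - s))^2 = 1 - 2 * Re s + (norm s)^2"
      unfolding cmod_power2 by (simp add: power2_eq_square algebra_simps)
    have ns2: "(norm s)^2 = \<rho>" by (simp add: s_def rho_n)
    have ns3: "Re s = sqrt ((\<rho> + x)/2)" by (simp add: s_def rho_n x_def)
    have K2: "(2*(q+1)/3)^2 = 4/3 + 8*q/9" by (simp add: power2_eq_square algebra_simps q2 q3)
    have "(norm (1 - s))^2 < (2*(q+1)/3)^2" unfolding ns1 ns2 ns3 K2 using main by linarith
    then have ns: "norm (1 - s) < 2*(q+1)/3"
      by (rule power_less_imp_less_base) (use qb in simp)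
    have p: "phiRL u - 1 = of_real (q-1) * (1 - s)"
      by (simp add: phiRL' s_def \<zeta>_def algebra_simps)
    have nq: "norm (complex_of_real (q-1)) = q-1" using qb by (simp only: norm_of_real) simp
    have "norm (phiRL u - 1) = norm (complex_of_real (q-1)) * norm (1 - s)" unfolding p by (rule norm_mult)
    then have "norm (phiRL u - 1) = (q-1) * norm (1 - s)" unfolding nq .
    also have "\<dots> < (q-1) * (2*(q+1)/3)" using ns qb by simp
    also have "\<dots> = 2/3" by (simp add: algebra_simps q2)
    finally show "norm (phiRL u - 1) < 2/3" .
  qed
  have pt: "\<exists>z\<in>ball 0 \<rho>. phiRL z \<notin> OmegaNe" if "R < \<rho>" "\<rho> \<le> 1" for \<rho>
  proof -
    define x where "x = -(R + \<rho>)/2"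
    have x: "x \<le> -R" "-\<rho> < x" "-1 < x" "x < 0" using that R0 by (auto simp: x_def)
    have "c*x > c*(-1)" using x c01 by (intro mult_strict_left_mono) auto
    then have d: "1 + c*x > 0" using c01 by linarith
    define b where "b = (33 + 20*q)/9"
    have bc: "R*(1 + b*c) = b - 1" by (simp add: R_def b_def c_def algebra_simps q2 q3) (simp add: field_simps)
    have "1 + b*c > 0" using c01 qb by (simp add: b_def add_pos_pos)
    then have "x*(1+b*c) \<le> -R*(1+b*c)" using x by (intro mult_right_mono) auto
    then have "1 - x \<ge> b*(1+c*x)" using bc by (simp add: algebra_simps)
    then have mb: "(1-x)/(1+c*x) \<ge> b" using d by (simp add: pos_le_divide_eq)
    have sb: "sqrt b = (5 + 2*q)/3"
    proof -
      have "b = ((5+2*q)/3)^2" by (simp add: b_def power2_eq_square algebra_simps q2 q3)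
      then show ?thesis using qb by simp
    qed
    have "sqrt ((1-x)/(1+c*x)) \<ge> (5+2*q)/3" using real_sqrt_le_mono[OF mb] sb by simp
    then have "(q-1) * sqrt ((1-x)/(1+c*x)) \<ge> (q-1) * ((5+2*q)/3)" using qb by (intro mult_left_mono) auto
    moreover have "(q-1) * ((5+2*q)/3) = q - 1/3" by (simp add: algebra_simps q2 q3) (simp add: field_simps)
    ultimately have v: "q - (q-1) * sqrt ((1-x)/(1+c*x)) \<le> 1/3" by simp
    have "(1-x)/(1+c*x) \<ge> 0" using d x by simp
    have mx: "m (of_real x) = of_real ((1-x)/(1+c*x))" by (simp add: m')
    have eqv: "phiRL (of_real x) = of_real (q - (q-1) * sqrt ((1-x)/(1+c*x)))"
      using \<open>(1-x)/(1+c*x) \<ge> 0\<close> by (simp add: phiRL' mx)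
    have nin: "complex_of_real (q - (q-1) * sqrt ((1-x)/(1+c*x))) \<notin> OmegaNe"
      by (rule real_notin) (use v in simp)
    have "phiRL (of_real x) \<notin> OmegaNe" using nin unfolding eqv .
    moreover have "complex_of_real x \<in> ball 0 \<rho>" using x by simp
    ultimately show ?thesis by blast
  qed
  have "radiusNe (Sstar phiRL) = R"
  proof (rule radius_eq[OF R0])
    show "\<And>u. norm u < R \<Longrightarrow> phiRL u \<in> OmegaNe" by (rule bnd)
    fix \<rho> assume r: "R < \<rho>" "\<rho> \<le> 1"
    show "\<exists>f\<in>Sstar phiRL. \<exists>z\<in>ball 0 \<rho>. Qf f z \<notin> OmegaNe"
    proof (rule sharp_generic[OF hol])
      show "\<And>u. u \<in> ball 0 1 \<Longrightarrow> phiRL u = 1 + u * h u" by (rule eq)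
    qed (use pt r in auto)
  qed
  then show ?thesis by (simp add: Req)
qed


theorem mainTheorem7:
  shows "radiusNe (Sstar phiRL) = 56 / (122 - 41 * sqrt 2)
       \<and> radiusNe (Sstar phiC) = sqrt 2 - 1
       \<and> radiusNe (Sstar phi0) = 1 / (3 * sqrt 2 - 3)"
  using radius_RL radius_C radius_0 by blast

end
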